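(* There exist a wGKAT automaton $(Y,\gamma)$ and a homomorphism $h:(\mathrm{Exp},\partial)\to(Y,\gamma)$ whose kernel $\{(e,f): h(e)=h(f)\}$ is exactly the relation $\equiv$; concretely, there is a transition map $\partial_\equiv$ on $\mathrm{Exp}/{\equiv}$ making the quotient map $[-]_\equiv$ a homomorphism from $(\mathrm{Exp},\partial)$ to $(\mathrm{Exp}/{\equiv},\partial_\equiv)$.
   Context: Fix a finite set $T$ of primitive tests, a set $\mathrm{Act}$ of atomic actions, a set $\mathrm{Out}$ of return values, and a semiring $(S,+,\cdot,0,1)$ that is positive ($x+y=0\Rightarrow x=y=0$), refinement (whenever $x+y=z+w$ there exist $s,t,u,v$ with $s+t=x$, $s+u=z$, $u+v=y$, $t+v=w$) and Conway (with ${}^*:S\to S$ satisfying $(a+b)^*=a^*(ba^* )^*$, $(ab)^*=1+a(ba)^*b$). Tests: $b,c\in\mathrm{BExp}::=\mathtt{0}\mid\mathtt{1}\mid t\ (t\in T)\mid\bar b\mid b+c\mid bc$ ($\mathtt 0,\mathtt 1$ false/true, distinct from semiring $0,1$); $\equiv_{BA}$ is Boolean equivalence; $\mathrm{At}$ is the finite set of atoms of the free Boolean algebra on $T$, atoms also regarded as tests; $\alpha\le b$ means $\alpha$ entails $b$. Expressions: $e,f\in\mathrm{Exp}::= p\in\mathrm{Act}\mid b\in\mathrm{BExp}\mid e+_b f\mid e;f\mid e^{(b)}\mid v\in\mathrm{Out}\mid e\oplus_{r,s} f\ (r,s\in S)$; $\odot r:=\mathtt 1\oplus_{r,0}\mathtt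 0$. $\mathcal M_\omega(X)$: finitely supported maps $X\to S$, pointwise operations; $\delta_x$ indicator of $x$; $\nu[A]=\sum_{x\in A}\nu(x)$. A wGKAT automaton is $(X,\beta)$ with $\beta:X\to\mathcal M_\omega(\{\mathsf{acc},\mathsf{rej}\}+\mathrm{Out}+\mathrm{Act}\times X)^{\mathrm{At}}$. A map $h:X\to Y$ between automata $(X,\beta),(Y,\gamma)$ is a homomorphism if for all $x,\alpha$: $\gamma(h(x))_\alpha(o)=\beta(x)_\alpha(o)$ for $o\in\{\mathsf{acc},\mathsf{rej}\}+\mathrm{Out}$, and $\gamma(h(x))_\alpha(p,y)=\beta(x)_\alpha[\{p\}\times h^{-1}(y)]$. The derivative automaton $(\mathrm{Exp},\partial)$: $\partial(b)_\alpha=\delta_{\mathsf{acc}}$ if $\alpha\le b$, else $\delta_{\mathsf{rej}}$; $\partial(v)_\alpha=\delta_v$; $\partial(p)_\alpha=\delta_{(p,\mathtt 1)}$; $\partial(e+_bf)_\alpha=\partial(e)_\alpha$ if $\alpha\le b$, else $\partial(f)_\alpha$; $\partial(e\oplus_{r,s}f)_\alpha=r\partial(e)_\alpha+s\partial(f)_\alpha$; $\partial(e;f)_\alpha=\sum_x\partial(e)_\alpha(x)c_{\alpha,f}(x)$ with $c_{\alpha,f}(\mathsf{acc})=\partial(f)_\alpha$, $c_{\alpha,f}(x)=\delta_x$ for $x\in\{\mathsf{rej}\}\cup\mathrm{Out}$, $c_{\alpha,f}(p,e')=\delta_{(p,e';f)}$; $\partial(e^{(b)})_\alpha(x)$ is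 $1$ if $x=\mathsf{acc}$ and $\alpha\le\bar b$; $\partial(e)_\alpha(\mathsf{acc})^*\partial(e)_\alpha(x)$ if $x\in\{\mathsf{rej}\}\cup\mathrm{Out}$ and $\alpha\le b$; $\partial(e)_\alpha(\mathsf{acc})^*\partial(e)_\alpha(p,e')$ if $x=(p,e';e^{(b)})$ and $\alpha\le b$; $0$ otherwise. $E:\mathrm{Exp}\to S^{\mathrm{At}}$: $E(p)_\alpha=E(v)_\alpha=0$; $E(b)_\alpha=1$ if $\alpha\le b$ else $0$; $E(e\oplus_{r,s}f)_\alpha=rE(e)_\alpha+sE(f)_\alpha$; $E(e+_bf)_\alpha=E(e)_\alpha$ if $\alpha\le b$ else $E(f)_\alpha$; $E(e;f)_\alpha=E(e)_\alpha E(f)_\alpha$; $E(e^{(b)})_\alpha=E(\bar b)_\alpha$. The relation $\equiv$ is the smallest congruence on $\mathrm{Exp}$ (tests taken up to $\equiv_{BA}$; sequencing binds tighter than $\oplus$, $\odot$ binds tightest) containing, for all $e,f,g\in\mathrm{Exp}$, tests $b,c$, $v\in\mathrm{Out}$, $r,s,t,u\in S$: (G1) $e+_be\equiv e$; (G2) $e+_bf\equiv b;e+_bf$; (G3) $e+_bf\equiv f+_{\bar b}e$; (G4) $(e+_bf)+_cg\equiv e+_{bc}(f+_cg)$; (D1) $e\oplus_{r,s}(f+_bg)\equiv(e\oplus_{r,s}f)+_b(e\oplus_{r,s}g)$; (D2) $e\oplus_{r,s}(f\oplus_{t,u}g)\equiv e\oplus_{r,1}(f\oplus_{st,su}g)$;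 (D3) $b;(e\oplus_{r,s}f)\equiv b;(b;e\oplus_{r,s}b;f)$; (S1) $\mathtt 1;e\equiv e\equiv e;\mathtt 1$; (S2) $(e;f);g\equiv e;(f;g)$; (S3) $\mathtt 0;e\equiv\mathtt 0$; (S4) $(e\oplus_{r,s}f);g\equiv e;g\oplus_{r,s}f;g$; (S5) $(e+_bf);g\equiv e;g+_bf;g$; (S6) $v;e\equiv v$; (S7) $b;c\equiv bc$; (L1) $e^{(b)}\equiv e;e^{(b)}+_b\mathtt 1$; (C1) $\odot1\equiv\mathtt 1$; (C2) $\odot0;e\equiv\odot0$; (W1) $e\oplus_{r,s}e\equiv\odot(r+s);e$; (W2) $e\oplus_{r,s}f\equiv f\oplus_{s,r}e$; (W3) $e\oplus_{r,s}(f\oplus_{t,u}g)\equiv(e\oplus_{r,st}f)\oplus_{1,su}g$; (W4) $e\oplus_{ru,s}f\equiv(\odot u;e)\oplus_{r,s}f$; and closed under the rules (L2) if $e\equiv(f\oplus_{r,s}\mathtt 1)+_cg$ then $c;e^{(b)}\equiv c;((\odot(s^*r);f;e^{(b)})+_b\mathtt 1)$; (F1) if $g\equiv e;g+_bf$ and $E(e)_\alpha=0$ for all $\alpha\in\mathrm{At}$ then $g\equiv e^{(b)};f$. *)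

theory Defs
  imports Main
begin

class wgkat_semiring = semiring_0 + monoid_mult +
  fixes cstar :: "'a \<Rightarrow> 'a"
  assumes positive: "x + y = 0 \<Longrightarrow> x = 0 \<and> y = 0"
  and refinement: "x + y = z + w \<Longrightarrow>
        \<exists>s t u v. s + t = x \<and> s + u = z \<and> u + v = y \<and> t + v = w"
  and conway_sum: "cstar (a + b) = cstar a * cstar (b * cstar a)"
  and conway_prod: "cstar (a * b) = 1 + a * cstar (b * a) * b"

datatype 't bexp = BZero | BOne | BPrim 't | BNeg "'t bexp"
  | BOr "'t bexp" "'t bexp" | BAnd "'t bexp" "'t bexp"

text \<open>Atoms of the free Boolean algebra over a finite set of primitive tests
  are identified with sets of primitive tests (the tests that are true).
  sat alpha b means alpha entails b.\<close>
type_synonym 't atom = "'t set"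

primrec sat :: "'t atom \<Rightarrow> 't bexp \<Rightarrow> bool" where
  "sat \<alpha> BZero = False"
| "sat \<alpha> BOne = True"
| "sat \<alpha> (BPrim t) = (t \<in> \<alpha>)"
| "sat \<alpha> (BNeg b) = (\<not> sat \<alpha> b)"
| "sat \<alpha> (BOr b c) = (sat \<alpha> b \<or> sat \<alpha> c)"
| "sat \<alpha> (BAnd b c) = (sat \<alpha> b \<and> sat \<alpha> c)"

definition beq :: "'t bexp \<Rightarrow> 't bexp \<Rightarrow> bool" where
  "beq b c \<longleftrightarrow> (\<forall>\<alpha>. sat \<alpha> b = sat \<alpha> c)"

datatype ('t, 'p, 'v, 's) exp =
    Act 'p
  | Test "'t bexp"
  | GSum "('t, 'p, 'v, 's) exp" "'t bexp" "('t, 'p, 'v, 's) exp"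
  | Seq "('t, 'p, 'v, 's) exp" "('t, 'p, 'v, 's) exp"
  | While "('t, 'p, 'v, 's) exp" "'t bexp"
  | Ret 'v
  | WSum "('t, 'p, 'v, 's) exp" 's 's "('t, 'p, 'v, 's) exp"

definition odot :: "'s::wgkat_semiring \<Rightarrow> ('t, 'p, 'v, 's) exp" where
  "odot r = WSum (Test BOne) r 0 (Test BZero)"

datatype ('p, 'v, 'x) outc = Acc | Rej | OutV 'v | Trans 'p 'x

definition fin_supp :: "('a \<Rightarrow> 's::zero) \<Rightarrow> bool" where
  "fin_supp \<nu> \<longleftrightarrow> finite {x. \<nu> x \<noteq> 0}"

definition dirac :: "'a \<Rightarrow> 'a \<Rightarrow> 's::{zero,one}" where
  "dirac x = (\<lambda>y. if y = x then 1 else 0)"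

definition mass :: "('a \<Rightarrow> 's::comm_monoid_add) \<Rightarrow> 'a set \<Rightarrow> 's" where
  "mass \<nu> A = sum \<nu> {x \<in> A. \<nu> x \<noteq> 0}"

definition wgkat_automaton ::
  "('x \<Rightarrow> 't atom \<Rightarrow> ('p, 'v, 'x) outc \<Rightarrow> 's::wgkat_semiring) \<Rightarrow> bool" where
  "wgkat_automaton \<beta> \<longleftrightarrow> (\<forall>x \<alpha>. fin_supp (\<beta> x \<alpha>))"

definition is_hom ::
  "('x \<Rightarrow> 't atom \<Rightarrow> ('p, 'v, 'x) outc \<Rightarrow> 's::wgkat_semiring)
   \<Rightarrow> ('y \<Rightarrow> 't atom \<Rightarrow> ('p, 'v, 'y) outc \<Rightarrow> 's)
   \<Rightarrow> ('x \<Rightarrow> 'y) \<Rightarrow> bool" where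
  "is_hom \<beta> \<gamma> h \<longleftrightarrow>
     (\<forall>x \<alpha>. \<gamma> (h x) \<alpha> Acc = \<beta> x \<alpha> Acc
          \<and> \<gamma> (h x) \<alpha> Rej = \<beta> x \<alpha> Rej
          \<and> (\<forall>v. \<gamma> (h x) \<alpha> (OutV v) = \<beta> x \<alpha> (OutV v))
          \<and> (\<forall>p y. \<gamma> (h x) \<alpha> (Trans p y) = mass (\<beta> x \<alpha>) {Trans p x' | x'. h x' = y}))"

primrec deriv :: "('t, 'p, 'v, 's::wgkat_semiring) exp \<Rightarrow> 't atom
                   \<Rightarrow> ('p, 'v, ('t, 'p, 'v, 's) exp) outc \<Rightarrow> 's" where
  "deriv (Test b) \<alpha> = dirac (if sat \<alpha> b then Acc else Rej)"
| "deriv (Ret v) \<alpha> = dirac (OutV v)"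
| "deriv (Act p) \<alpha> = dirac (Trans p (Test BOne))"
| "deriv (GSum e b f) \<alpha> = (if sat \<alpha> b then deriv e \<alpha> else deriv f \<alpha>)"
| "deriv (WSum e r s f) \<alpha> = (\<lambda>z. r * deriv e \<alpha> z + s * deriv f \<alpha> z)"
| "deriv (Seq e f) \<alpha> = (\<lambda>z. deriv e \<alpha> Acc * deriv f \<alpha> z +
      (case z of
         Acc \<Rightarrow> 0
       | Rej \<Rightarrow> deriv e \<alpha> Rej
       | OutV v \<Rightarrow> deriv e \<alpha> (OutV v)
       | Trans p g \<Rightarrow> (case g of Seq e' f' \<Rightarrow> if f' = f then deriv e \<alpha> (Trans p e') else 0
                                | _ \<Rightarrow> 0)))"
| "deriv (While e b) \<alpha> = (\<lambda>z.
      (case z of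
         Acc \<Rightarrow> (if sat \<alpha> (BNeg b) then 1 else 0)
       | Rej \<Rightarrow> (if sat \<alpha> b then cstar (deriv e \<alpha> Acc) * deriv e \<alpha> Rej else 0)
       | OutV v \<Rightarrow> (if sat \<alpha> b then cstar (deriv e \<alpha> Acc) * deriv e \<alpha> (OutV v) else 0)
       | Trans p g \<Rightarrow> (case g of
            Seq e' f' \<Rightarrow> if sat \<alpha> b \<and> f' = While e b
                          then cstar (deriv e \<alpha> Acc) * deriv e \<alpha> (Trans p e') else 0
          | _ \<Rightarrow> 0)))"

primrec Eps :: "('t, 'p, 'v, 's::wgkat_semiring) exp \<Rightarrow> 't atom \<Rightarrow> 's" where
  "Eps (Act p) \<alpha> = 0"
| "Eps (Ret v) \<alpha> = 0"
| "Eps (Test b) \<alpha> = (if sat \<alpha> b then 1 else 0)"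
| "Eps (WSum e r s f) \<alpha> = r * Eps e \<alpha> + s * Eps f \<alpha>"
| "Eps (GSum e b f) \<alpha> = (if sat \<alpha> b then Eps e \<alpha> else Eps f \<alpha>)"
| "Eps (Seq e f) \<alpha> = Eps e \<alpha> * Eps f \<alpha>"
| "Eps (While e b) \<alpha> = (if sat \<alpha> (BNeg b) then 1 else 0)"

inductive eqv :: "('t, 'p, 'v, 's::wgkat_semiring) exp \<Rightarrow> ('t, 'p, 'v, 's) exp \<Rightarrow> bool"
  (infix "\<equiv>\<^sub>w" 50) where
  refl: "e \<equiv>\<^sub>w e"
| sym: "e \<equiv>\<^sub>w f \<Longrightarrow> f \<equiv>\<^sub>w e"
| trans: "e \<equiv>\<^sub>w f \<Longrightarrow> f \<equiv>\<^sub>w g \<Longrightarrow> e \<equiv>\<^sub>w g"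
| cong_test: "beq b c \<Longrightarrow> Test b \<equiv>\<^sub>w Test c"
| cong_gsum: "e \<equiv>\<^sub>w e' \<Longrightarrow> beq b b' \<Longrightarrow> f \<equiv>\<^sub>w f' \<Longrightarrow> GSum e b f \<equiv>\<^sub>w GSum e' b' f'"
| cong_seq: "e \<equiv>\<^sub>w e' \<Longrightarrow> f \<equiv>\<^sub>w f' \<Longrightarrow> Seq e f \<equiv>\<^sub>w Seq e' f'"
| cong_while: "e \<equiv>\<^sub>w e' \<Longrightarrow> beq b b' \<Longrightarrow> While e b \<equiv>\<^sub>w While e' b'"
| cong_wsum: "e \<equiv>\<^sub>w e' \<Longrightarrow> f \<equiv>\<^sub>w f' \<Longrightarrow> WSum e r s f \<equiv>\<^sub>w WSum e' r s f'"
| G1: "GSum e b e \<equiv>\<^sub>w e"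
| G2: "GSum e b f \<equiv>\<^sub>w GSum (Seq (Test b) e) b f"
| G3: "GSum e b f \<equiv>\<^sub>w GSum f (BNeg b) e"
| G4: "GSum (GSum e b f) c g \<equiv>\<^sub>w GSum e (BAnd b c) (GSum f c g)"
| D1: "WSum e r s (GSum f b g) \<equiv>\<^sub>w GSum (WSum e r s f) b (WSum e r s g)"
| D2: "WSum e r s (WSum f t u g) \<equiv>\<^sub>w WSum e r 1 (WSum f (s * t) (s * u) g)"
| D3: "Seq (Test b) (WSum e r s f) \<equiv>\<^sub>w
       Seq (Test b) (WSum (Seq (Test b) e) r s (Seq (Test b) f))"
| S1a: "Seq (Test BOne) e \<equiv>\<^sub>w e"
| S1b: "e \<equiv>\<^sub>w Seq e (Test BOne)"
| S2: "Seq (Seq e f) g \<equiv>\<^sub>w Seq e (Seq f g)"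
| S3: "Seq (Test BZero) e \<equiv>\<^sub>w Test BZero"
| S4: "Seq (WSum e r s f) g \<equiv>\<^sub>w WSum (Seq e g) r s (Seq f g)"
| S5: "Seq (GSum e b f) g \<equiv>\<^sub>w GSum (Seq e g) b (Seq f g)"
| S6: "Seq (Ret v) e \<equiv>\<^sub>w Ret v"
| S7: "Seq (Test b) (Test c) \<equiv>\<^sub>w Test (BAnd b c)"
| L1: "While e b \<equiv>\<^sub>w GSum (Seq e (While e b)) b (Test BOne)"
| C1: "odot 1 \<equiv>\<^sub>w Test BOne"
| C2: "Seq (odot 0) e \<equiv>\<^sub>w odot 0"
| W1: "WSum e r s e \<equiv>\<^sub>w Seq (odot (r + s)) e"
| W2: "WSum e r s f \<equiv>\<^sub>w WSum f s r e"
| W3: "WSum e r s (WSum f t u g) \<equiv>\<^sub>w WSum (WSum e r (s * t) f) 1 (s * u) g"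
| W4: "WSum e (r * u) s f \<equiv>\<^sub>w WSum (Seq (odot u) e) r s f"
| L2: "e \<equiv>\<^sub>w GSum (WSum f r s (Test BOne)) c g \<Longrightarrow>
       Seq (Test c) (While e b) \<equiv>\<^sub>w
       Seq (Test c) (GSum (Seq (odot (cstar s * r)) (Seq f (While e b))) b (Test BOne))"
| F1: "g \<equiv>\<^sub>w GSum (Seq e g) b f \<Longrightarrow> (\<forall>\<alpha>. Eps e \<alpha> = 0) \<Longrightarrow> g \<equiv>\<^sub>w Seq (While e b) f"

end

theory Submission
  imports Defs
begin

definition closed :: "('t,'p,'v,'s::wgkat_semiring) exp set \<Rightarrow> bool" where
 "closed D \<longleftrightarrow> (\<forall>x y. x \<in> D \<longrightarrow> x \<equiv>\<^sub>w y \<longrightarrow> y \<in> D)"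

definition Mv :: "('t,'p,'v,'s::wgkat_semiring) exp \<Rightarrow> 't atom \<Rightarrow> 'p \<Rightarrow> ('t,'p,'v,'s) exp set \<Rightarrow> 's" where
 "Mv e \<alpha> p D = mass (\<lambda>x. deriv e \<alpha> (Trans p x)) D"

lemma fs_subset: "finite F \<Longrightarrow> {x. \<nu> x \<noteq> 0} \<subseteq> F \<Longrightarrow> fin_supp \<nu>"
  unfolding fin_supp_def by (rule finite_subset)

lemma mass_eq: "finite F \<Longrightarrow> {x. \<nu> x \<noteq> 0} \<subseteq> F \<Longrightarrow> mass \<nu> D = sum \<nu> (D \<inter> F)"
  unfolding mass_def by (rule sum.mono_neutral_left) auto

lemma mass_add: "fin_supp (a::_\<Rightarrow>'s::wgkat_semiring) \<Longrightarrow> fin_supp b \<Longrightarrow> mass (\<lambda>z. a z + b z) D = mass a D + mass b D"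
proof -
  assume a: "fin_supp a" and b: "fin_supp b"
  let ?F = "{x. a x \<noteq> 0} \<union> {x. b x \<noteq> 0}"
  have f: "finite ?F" using a b by (auto simp: fin_supp_def)
  have "mass (\<lambda>z. a z + b z) D = sum (\<lambda>z. a z + b z) (D \<inter> ?F)"
    by (rule mass_eq[OF f]) auto
  also have "\<dots> = sum a (D \<inter> ?F) + sum b (D \<inter> ?F)" by (rule sum.distrib)
  also have "sum a (D \<inter> ?F) = mass a D" by (rule mass_eq[OF f, symmetric]) auto
  also have "sum b (D \<inter> ?F) = mass b D" by (rule mass_eq[OF f, symmetric]) auto
  finally show ?thesis .
qed

lemma mass_mult: "fin_supp (a::_\<Rightarrow>'s::wgkat_semiring) \<Longrightarrow> mass (\<lambda>z. c * a z) D = c * mass a D"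
proof -
  assume a: "fin_supp a"
  let ?F = "{x. a x \<noteq> 0}"
  have f: "finite ?F" using a by (auto simp: fin_supp_def)
  have "mass (\<lambda>z. c * a z) D = sum (\<lambda>z. c * a z) (D \<inter> ?F)"
    by (rule mass_eq[OF f]) auto
  also have "\<dots> = c * sum a (D \<inter> ?F)" by (rule sum_distrib_left[symmetric])
  also have "sum a (D \<inter> ?F) = mass a D" by (rule mass_eq[OF f, symmetric]) auto
  finally show ?thesis .
qed

lemma mass_zero[simp]: "mass (\<lambda>z. 0) D = 0" by (simp add: mass_def)

lemma mass_reindex:
  assumes "inj f" "\<forall>g. \<mu>' g \<noteq> 0 \<longrightarrow> g \<in> range f" "\<forall>x. \<mu>' (f x) = \<mu> x"
  shows "mass \<mu>' D = mass \<mu> {x. f x \<in> D}"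
proof -
  have "{g \<in> D. \<mu>' g \<noteq> 0} = f ` {x \<in> {x. f x \<in> D}. \<mu> x \<noteq> 0}" using assms by auto
  then show ?thesis unfolding mass_def using assms(1,3)
    by (simp add: sum.reindex inj_on_def inj_def comp_def)
qed

lemma mass_Trans: "mass \<nu> {Trans p x | x. P x} = mass (\<lambda>x. \<nu> (Trans p x)) {x. P x}"
proof -
  have "{z \<in> {Trans p x | x. P x}. \<nu> z \<noteq> 0} = Trans p ` {x \<in> {x. P x}. \<nu> (Trans p x) \<noteq> 0}" by auto
  then show ?thesis unfolding mass_def by (simp add: sum.reindex inj_on_def comp_def)
qed

lemma fs_tp: "fin_supp \<nu> \<Longrightarrow> fin_supp (\<lambda>x. \<nu> (Trans p x))"
  unfolding fin_supp_def
proof -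
  assume "finite {x. \<nu> x \<noteq> 0}"
  then have "finite (Trans p -` {z. \<nu> z \<noteq> 0})" by (rule finite_vimageI) (simp add: inj_on_def)
  then show "finite {x. \<nu> (Trans p x) \<noteq> 0}" by (simp add: vimage_def)
qed

lemma fs_add: "fin_supp (a::_\<Rightarrow>'s::wgkat_semiring) \<Longrightarrow> fin_supp b \<Longrightarrow> fin_supp (\<lambda>z. a z + b z)"
  unfolding fin_supp_def by (rule finite_subset[of _ "{x. a x \<noteq> 0} \<union> {x. b x \<noteq> 0}"]) auto

lemma fs_mult: "fin_supp (a::_\<Rightarrow>'s::wgkat_semiring) \<Longrightarrow> fin_supp (\<lambda>z. c * a z)"
  unfolding fin_supp_def by (rule finite_subset[of _ "{x. a x \<noteq> 0}"]) auto

lemma fs_dirac: "fin_supp (dirac x)"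
  unfolding fin_supp_def dirac_def by (rule finite_subset[of _ "{x}"]) auto

lemma fs_deriv: "fin_supp (deriv e \<alpha>)"
proof (induction e arbitrary: \<alpha>)
  case (Seq e f)
  let ?m = "map_outc id id (\<lambda>x. Seq x f)"
  have "fin_supp (\<lambda>z. (case z of
         Acc \<Rightarrow> 0
       | Rej \<Rightarrow> deriv e \<alpha> Rej
       | OutV v \<Rightarrow> deriv e \<alpha> (OutV v)
       | Trans p g \<Rightarrow> (case g of Seq e' f' \<Rightarrow> if f' = f then deriv e \<alpha> (Trans p e') else 0
                                | _ \<Rightarrow> 0)))" (is "fin_supp ?k")
    unfolding fin_supp_def
  proof (rule finite_subset[of _ "?m ` {x. deriv e \<alpha> x \<noteq> 0}"])
    show "{x. ?k x \<noteq> 0} \<subseteq> ?m ` {x. deriv e \<alpha> x \<noteq> 0}"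
    proof
      fix z assume "z \<in> {x. ?k x \<noteq> 0}"
      then show "z \<in> ?m ` {x. deriv e \<alpha> x \<noteq> 0}"
      proof (cases z)
        case Rej then show ?thesis using \<open>z \<in> _\<close> by (auto intro: image_eqI[of _ _ Rej])
      next
        case (OutV v) then show ?thesis using \<open>z \<in> _\<close> by (auto intro: image_eqI[of _ _ "OutV v"])
      next
        case (Trans p g) then show ?thesis using \<open>z \<in> _\<close>
          by (cases g) (auto split: if_splits intro: image_eqI[of _ _ "Trans p _"])
      qed auto
    qed
    show "finite (?m ` {x. deriv e \<alpha> x \<noteq> 0})" using Seq.IH(1) by (simp add: fin_supp_def)
  qed
  then show ?case using Seq by (simp add: fs_add fs_mult del: outc.case_distrib)
next
  case (While e b)
  let ?m = "map_outc id id (\<lambda>x. Seq x (While e b))"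
  show ?case
    unfolding fin_supp_def
  proof (rule finite_subset[of _ "{Acc} \<union> ?m ` {x. deriv e \<alpha> x \<noteq> 0}"])
    show "{x. deriv (While e b) \<alpha> x \<noteq> 0} \<subseteq> {Acc} \<union> ?m ` {x. deriv e \<alpha> x \<noteq> 0}"
    proof
      fix z assume "z \<in> {x. deriv (While e b) \<alpha> x \<noteq> 0}"
      then show "z \<in> {Acc} \<union> ?m ` {x. deriv e \<alpha> x \<noteq> 0}"
      proof (cases z)
        case Rej then show ?thesis using \<open>z \<in> _\<close> by (auto split: if_splits intro: image_eqI[of _ _ Rej])
      next
        case (OutV v) then show ?thesis using \<open>z \<in> _\<close> by (auto split: if_splits intro: image_eqI[of _ _ "OutV v"])
      next
        case (Trans p g) then show ?thesis using \<open>z \<in> _\<close>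
          by (cases g) (auto split: if_splits intro: image_eqI[of _ _ "Trans p _"])
      qed auto
    qed
    show "finite ({Acc} \<union> ?m ` {x. deriv e \<alpha> x \<noteq> 0})" using While.IH by (simp add: fin_supp_def)
  qed
qed (auto simp: fs_dirac fs_add fs_mult)

lemma fs_dtp: "fin_supp (\<lambda>x. deriv e \<alpha> (Trans p x))" by (rule fs_tp[OF fs_deriv])

lemma Mv_Test[simp]: "Mv (Test b) \<alpha> p D = 0" by (simp add: Mv_def dirac_def)
lemma Mv_Ret[simp]: "Mv (Ret v) \<alpha> p D = 0" by (simp add: Mv_def dirac_def)
lemma Mv_GSum[simp]: "Mv (GSum e b f) \<alpha> p D = (if sat \<alpha> b then Mv e \<alpha> p D else Mv f \<alpha> p D)"
  by (simp add: Mv_def)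
lemma Mv_WSum[simp]: "Mv (WSum e r s f) \<alpha> p D = r * Mv e \<alpha> p D + s * Mv f \<alpha> p D"
  by (simp add: Mv_def mass_add mass_mult fs_mult fs_dtp)

lemma Mv_Seq[simp]: "Mv (Seq e f) \<alpha> p D = deriv e \<alpha> Acc * Mv f \<alpha> p D + Mv e \<alpha> p {x. Seq x f \<in> D}"
proof -
  let ?k = "\<lambda>g. (case g of Seq e' f' \<Rightarrow> if f' = f then deriv e \<alpha> (Trans p e') else 0 | _ \<Rightarrow> 0)"
  have k: "mass ?k D = Mv e \<alpha> p {x. Seq x f \<in> D}" unfolding Mv_def
    by (rule mass_reindex) (auto simp: inj_def split: exp.splits if_splits)
  have fk: "fin_supp ?k"
  proof -
    have "mass ?k D = mass ?k D" ..
    have "{x. ?k x \<noteq> 0} \<subseteq> (\<lambda>x. Seq x f) ` {x. deriv e \<alpha> (Trans p x) \<noteq> 0}"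
    proof
      fix x assume "x \<in> {x. ?k x \<noteq> 0}"
      then show "x \<in> (\<lambda>x. Seq x f) ` {x. deriv e \<alpha> (Trans p x) \<noteq> 0}"
        by (cases x) (auto split: if_splits)
    qed
    then show ?thesis using fs_dtp[of e \<alpha> p] unfolding fin_supp_def by (meson finite_surj)
  qed
  have "Mv (Seq e f) \<alpha> p D = mass (\<lambda>x. deriv e \<alpha> Acc * deriv f \<alpha> (Trans p x) + ?k x) D"
    by (simp add: Mv_def)
  also have "\<dots> = deriv e \<alpha> Acc * Mv f \<alpha> p D + mass ?k D"
    by (simp add: mass_add mass_mult fs_mult fs_dtp fk Mv_def)
  finally show ?thesis using k by simp
qed

lemma Mv_While[simp]: "Mv (While e b) \<alpha> p D = (if sat \<alpha> b then cstar (deriv e \<alpha> Acc) * Mv e \<alpha> p {x. Seq x (While e b) \<in> D} else 0)"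
proof -
  let ?k = "\<lambda>g. (case g of Seq e' f' \<Rightarrow> if sat \<alpha> b \<and> f' = While e b then cstar (deriv e \<alpha> Acc) * deriv e \<alpha> (Trans p e') else 0 | _ \<Rightarrow> 0)"
  have "Mv (While e b) \<alpha> p D = mass ?k D"
    by (simp add: Mv_def)
  also have "\<dots> = mass (\<lambda>x. if sat \<alpha> b then cstar (deriv e \<alpha> Acc) * deriv e \<alpha> (Trans p x) else 0) {x. Seq x (While e b) \<in> D}"
    by (rule mass_reindex) (auto simp: inj_def split: exp.splits if_splits)
  also have "\<dots> = (if sat \<alpha> b then cstar (deriv e \<alpha> Acc) * Mv e \<alpha> p {x. Seq x (While e b) \<in> D} else 0)"
    by (simp add: mass_mult fs_dtp Mv_def)
  finally show ?thesis .
qed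

lemma Mv_Act[simp]: "Mv (Act q) \<alpha> p D = (if q = p \<and> Test BOne \<in> D then 1 else 0)"
proof -
  have c: "Mv (Act q) \<alpha> p D = sum (\<lambda>x. if Trans p x = Trans q (Test BOne) then 1 else 0) {x \<in> D. (if Trans p x = Trans q (Test BOne) then 1 else 0) \<noteq> (0::'a)}"
    by (simp add: Mv_def mass_def dirac_def)
  show ?thesis
  proof (cases "(1::'a) = 0")
    case True
    then show ?thesis using c by simp
  next
    case False
    have "{x \<in> D. (if Trans p x = Trans q (Test BOne) then 1 else 0) \<noteq> (0::'a)} = (if q = p \<and> Test BOne \<in> D then {Test BOne} else {})"
      using False by auto
    with c show ?thesis by simp
  qed
qed

definition R :: "('t,'p,'v,'s::wgkat_semiring) exp \<Rightarrow> ('t,'p,'v,'s) exp \<Rightarrow> bool" where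
  "R e f \<longleftrightarrow> (\<forall>\<alpha>. deriv e \<alpha> Acc = deriv f \<alpha> Acc \<and> deriv e \<alpha> Rej = deriv f \<alpha> Rej
     \<and> (\<forall>v. deriv e \<alpha> (OutV v) = deriv f \<alpha> (OutV v))
     \<and> (\<forall>p D. closed D \<longrightarrow> Mv e \<alpha> p D = Mv f \<alpha> p D))"

lemma closed_pre: "closed D \<Longrightarrow> (\<And>x y. x \<equiv>\<^sub>w y \<Longrightarrow> g x \<equiv>\<^sub>w g y) \<Longrightarrow> closed {x. g x \<in> D}"
  unfolding closed_def by blast

lemma closed_eq: "closed D \<Longrightarrow> (\<And>x. g x \<equiv>\<^sub>w g' x) \<Longrightarrow> {x. g x \<in> D} = {x. g' x \<in> D}"
  unfolding closed_def by (blast intro: eqv.sym)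

lemma closed_seq: "closed D \<Longrightarrow> closed {x. Seq x f \<in> D}"
  by (rule closed_pre) (auto intro: eqv.cong_seq eqv.refl)

lemma star_unfold: "cstar a = 1 + a * cstar (a::'s::wgkat_semiring)"
  using conway_prod[of a 1] by simp

lemma star_zero[simp]: "cstar (0::'s::wgkat_semiring) = 1"
  using conway_prod[of 0 0] by simp

lemma star_L2: "cstar (a + s) = cstar s * a * cstar (a + s) + cstar (s::'s::wgkat_semiring)"
proof -
  have "cstar (a + s) = cstar s * cstar (a * cstar s)" using conway_sum[of s a] by (simp add: add.commute)
  also have "\<dots> = cstar s * (1 + a * cstar s * cstar (a * cstar s))" using star_unfold[of "a * cstar s"] by simp
  also have "\<dots> = cstar s + cstar s * a * (cstar s * cstar (a * cstar s))" by (simp add: algebra_simps)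
  finally show ?thesis using conway_sum[of s a] by (simp add: add.commute)
qed

lemma L2alg: "cstar (r*a + s) * (r * x) = (cstar s * r) * (a * (cstar (r*a+s) * (r*x)) + (x::'s::wgkat_semiring))"
proof -
  have "cstar (r*a + s) * (r * x) = (cstar s * (r*a) * cstar (r*a + s) + cstar s) * (r * x)"
    using star_L2[of "r*a" s] by simp
  then show ?thesis by (simp add: algebra_simps)
qed

lemma Eps_deriv: "Eps e \<alpha> = deriv e \<alpha> Acc"
  by (induction e) (simp_all add: dirac_def)

lemma sound: "e \<equiv>\<^sub>w f \<Longrightarrow> R e f"
proof (induction rule: eqv.induct)
  case (refl e) then show ?case by (simp add: R_def)
next
  case (sym e f) then show ?case by (simp add: R_def)
next
  case (trans e f g) then show ?case by (simp add: R_def)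
next
  case (cong_test b c) then show ?case by (simp add: R_def beq_def)
next
  case (cong_gsum e e' b b' f f') then show ?case by (simp add: R_def beq_def)
next
  case (cong_seq e e' f f')
  have "\<And>D. closed D \<Longrightarrow> {x. Seq x f \<in> D} = {x. Seq x f' \<in> D}"
    by (rule closed_eq) (auto intro: eqv.cong_seq eqv.refl cong_seq.hyps)
  with cong_seq.IH show ?case by (simp add: R_def closed_seq)
next
  case (cong_while e e' b b')
  have "\<And>D. closed D \<Longrightarrow> {x. Seq x (While e b) \<in> D} = {x. Seq x (While e' b') \<in> D}"
    by (rule closed_eq) (auto intro: eqv.cong_seq eqv.refl eqv.cong_while cong_while.hyps)
  with cong_while.IH cong_while.hyps show ?case by (simp add: R_def closed_seq beq_def)
next
  case (cong_wsum e e' f f' r s) then show ?case by (simp add: R_def)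
next
  case (G1 e b) then show ?case by (simp add: R_def)
next
  case (G2 e b f) then show ?case by (simp add: R_def dirac_def)
next
  case (G3 e b f) then show ?case by (simp add: R_def)
next
  case (G4 e b f c g) then show ?case by (simp add: R_def)
next
  case (D1 e r s f b g) then show ?case by (simp add: R_def)
next
  case (D2 e r s f t u g) then show ?case by (simp add: R_def algebra_simps)
next
  case (D3 b e r s f) then show ?case by (simp add: R_def dirac_def algebra_simps)
next
  case (S1a e) then show ?case by (simp add: R_def dirac_def)
next
  case (S1b e)
  have [simp]: "\<And>D. closed D \<Longrightarrow> {x. Seq x (Test BOne) \<in> D} = D"
    using closed_eq[of _ "\<lambda>x. Seq x (Test BOne)" "\<lambda>x. x"] by (simp add: eqv.S1b eqv.sym)
  then show ?case by (simp add: R_def dirac_def)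
next
  case (S2 e f g)
  have "\<And>D. closed D \<Longrightarrow> {x. Seq (Seq x f) g \<in> D} = {x. Seq x (Seq f g) \<in> D}"
    by (rule closed_eq, assumption, rule eqv.S2)
  then show ?case by (simp add: R_def algebra_simps closed_seq)
next
  case (S3 e) then show ?case by (simp add: R_def dirac_def)
next
  case (S4 e r s f g) then show ?case by (simp add: R_def algebra_simps)
next
  case (S5 e b f g) then show ?case by (simp add: R_def)
next
  case (S6 v e) then show ?case by (simp add: R_def dirac_def)
next
  case (S7 b c) then show ?case by (simp add: R_def dirac_def)
next
  case (L1 e b)
  have key: "\<And>a x. cstar a * x = a * (cstar a * x) + (x::'d)"
    by (subst star_unfold) (simp add: algebra_simps)
  show ?case unfolding R_def
  proof
    fix \<alpha>
    show "deriv (While e b) \<alpha> Acc = deriv (GSum (Seq e (While e b)) b (Test BOne)) \<alpha> Acc \<and>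
      deriv (While e b) \<alpha> Rej = deriv (GSum (Seq e (While e b)) b (Test BOne)) \<alpha> Rej \<and>
      (\<forall>v. deriv (While e b) \<alpha> (OutV v) = deriv (GSum (Seq e (While e b)) b (Test BOne)) \<alpha> (OutV v)) \<and>
      (\<forall>p D. closed D \<longrightarrow> Mv (While e b) \<alpha> p D = Mv (GSum (Seq e (While e b)) b (Test BOne)) \<alpha> p D)"
      by (cases "sat \<alpha> b") (simp_all add: dirac_def key[symmetric])
  qed
next
  case C1 then show ?case by (simp add: R_def dirac_def odot_def)
next
  case (C2 e) then show ?case by (simp add: R_def dirac_def odot_def)
next
  case (W1 e r s) then show ?case by (simp add: R_def dirac_def odot_def algebra_simps)
next
  case (W2 e r s f) then show ?case by (simp add: R_def add.commute)
next
  case (W3 e r s f t u g) then show ?case by (simp add: R_def algebra_simps)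
next
  case (W4 e r u s f) then show ?case by (simp add: R_def dirac_def odot_def algebra_simps)
next
  case (L2 e f r s c g b)
  let ?W = "While e b"
  show ?case unfolding R_def
  proof
    fix \<alpha>
    show "deriv (Seq (Test c) ?W) \<alpha> Acc = deriv (Seq (Test c) (GSum (Seq (odot (cstar s * r)) (Seq f ?W)) b (Test BOne))) \<alpha> Acc \<and>
      deriv (Seq (Test c) ?W) \<alpha> Rej = deriv (Seq (Test c) (GSum (Seq (odot (cstar s * r)) (Seq f ?W)) b (Test BOne))) \<alpha> Rej \<and>
      (\<forall>v. deriv (Seq (Test c) ?W) \<alpha> (OutV v) = deriv (Seq (Test c) (GSum (Seq (odot (cstar s * r)) (Seq f ?W)) b (Test BOne))) \<alpha> (OutV v)) \<and>
      (\<forall>p D. closed D \<longrightarrow> Mv (Seq (Test c) ?W) \<alpha> p D = Mv (Seq (Test c) (GSum (Seq (odot (cstar s * r)) (Seq f ?W)) b (Test BOne))) \<alpha> p D)"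
    proof (cases "sat \<alpha> c \<and> sat \<alpha> b")
      case False then show ?thesis by (cases "sat \<alpha> c") (simp_all add: dirac_def odot_def)
    next
      case True
      from L2.IH True have eA: "deriv e \<alpha> Acc = r * deriv f \<alpha> Acc + s"
        and eR: "deriv e \<alpha> Rej = r * deriv f \<alpha> Rej"
        and eO: "\<And>v. deriv e \<alpha> (OutV v) = r * deriv f \<alpha> (OutV v)"
        and eM: "\<And>p D. closed D \<Longrightarrow> Mv e \<alpha> p D = r * Mv f \<alpha> p D"
        by (auto simp: R_def dirac_def)
      show ?thesis using True
        apply (simp add: dirac_def odot_def eA eR eO eM closed_seq)
        apply (intro conjI allI impI; rule L2alg)
        done
    qed
  qed
next
  case (F1 g e b f)
  let ?W = "While e b"
  have gW: "g \<equiv>\<^sub>w Seq ?W f" using F1.hyps by (rule eqv.F1)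
  have sets: "\<And>D. closed D \<Longrightarrow> {x. Seq x g \<in> D} = {x. Seq (Seq x ?W) f \<in> D}"
  proof (rule closed_eq, assumption)
    fix x
    show "Seq x g \<equiv>\<^sub>w Seq (Seq x ?W) f"
      by (rule eqv.trans[OF eqv.cong_seq[OF eqv.refl gW] eqv.sym[OF eqv.S2]])
  qed
  have eA: "\<And>\<alpha>. deriv e \<alpha> Acc = 0" using F1.hyps(2) by (simp add: Eps_deriv)
  show ?case unfolding R_def
  proof
    fix \<alpha>
    show "deriv g \<alpha> Acc = deriv (Seq ?W f) \<alpha> Acc \<and>
      deriv g \<alpha> Rej = deriv (Seq ?W f) \<alpha> Rej \<and>
      (\<forall>v. deriv g \<alpha> (OutV v) = deriv (Seq ?W f) \<alpha> (OutV v)) \<and>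
      (\<forall>p D. closed D \<longrightarrow> Mv g \<alpha> p D = Mv (Seq ?W f) \<alpha> p D)"
    proof (cases "sat \<alpha> b")
      case False
      have I: "deriv g \<alpha> Acc = deriv f \<alpha> Acc \<and> deriv g \<alpha> Rej = deriv f \<alpha> Rej
       \<and> (\<forall>v. deriv g \<alpha> (OutV v) = deriv f \<alpha> (OutV v))
       \<and> (\<forall>p D. closed D \<longrightarrow> Mv g \<alpha> p D = Mv f \<alpha> p D)"
        using F1.IH False unfolding R_def by (metis Mv_GSum deriv.simps(4))
      then show ?thesis using False by simp
    next
      case True
      have I: "deriv g \<alpha> Acc = 0 \<and> deriv g \<alpha> Rej = deriv e \<alpha> Rej
       \<and> (\<forall>v. deriv g \<alpha> (OutV v) = deriv e \<alpha> (OutV v))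
       \<and> (\<forall>p D. closed D \<longrightarrow> Mv g \<alpha> p D = Mv e \<alpha> p {x. Seq x g \<in> D})"
      proof -
        have "deriv g \<alpha> Acc = deriv (GSum (Seq e g) b f) \<alpha> Acc \<and> deriv g \<alpha> Rej = deriv (GSum (Seq e g) b f) \<alpha> Rej
         \<and> (\<forall>v. deriv g \<alpha> (OutV v) = deriv (GSum (Seq e g) b f) \<alpha> (OutV v))
         \<and> (\<forall>p D. closed D \<longrightarrow> Mv g \<alpha> p D = Mv (GSum (Seq e g) b f) \<alpha> p D)"
          using F1.IH unfolding R_def by blast
        then show ?thesis using True by (simp add: eA)
      qed
      then show ?thesis using True by (simp add: eA sets)

    qed
  qed
qed

lemma h_eq: "{g. e \<equiv>\<^sub>w g} = {g. f \<equiv>\<^sub>w g} \<longleftrightarrow> e \<equiv>\<^sub>w f"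
proof
  assume "{g. e \<equiv>\<^sub>w g} = {g. f \<equiv>\<^sub>w g}"
  then have "f \<in> {g. e \<equiv>\<^sub>w g}" by (simp add: eqv.refl)
  then show "e \<equiv>\<^sub>w f" by simp
next
  assume "e \<equiv>\<^sub>w f"
  then show "{g. e \<equiv>\<^sub>w g} = {g. f \<equiv>\<^sub>w g}" by (blast intro: eqv.trans eqv.sym)
qed

lemma mass_nz: "mass \<nu> D \<noteq> 0 \<Longrightarrow> \<exists>x\<in>D. \<nu> x \<noteq> 0"
proof (rule ccontr)
  assume a: "mass \<nu> D \<noteq> 0" and "\<not> (\<exists>x\<in>D. \<nu> x \<noteq> 0)"
  then have "{x \<in> D. \<nu> x \<noteq> 0} = {}" by auto
  then show False using a by (simp add: mass_def)
qed

theorem mainTheorem4: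
  fixes dummy :: "('t::finite, 'p, 'v, 's::wgkat_semiring) exp"
  shows "\<exists>\<gamma> :: ('t, 'p, 'v, 's) exp set \<Rightarrow> 't atom
                 \<Rightarrow> ('p, 'v, ('t, 'p, 'v, 's) exp set) outc \<Rightarrow> 's.
           wgkat_automaton \<gamma>
         \<and> is_hom (deriv :: ('t, 'p, 'v, 's) exp \<Rightarrow> _) \<gamma> (\<lambda>e. {f. e \<equiv>\<^sub>w f})
         \<and> (\<forall>e f :: ('t, 'p, 'v, 's) exp. {g. e \<equiv>\<^sub>w g} = {g. f \<equiv>\<^sub>w g} \<longleftrightarrow> e \<equiv>\<^sub>w f)"
proof -
  define h :: "('t, 'p, 'v, 's) exp \<Rightarrow> ('t, 'p, 'v, 's) exp set" where "h = (\<lambda>e. {f. e \<equiv>\<^sub>w f})"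
  define rep :: "('t, 'p, 'v, 's) exp set \<Rightarrow> ('t, 'p, 'v, 's) exp" where "rep = (\<lambda>C. SOME e. C = h e)"
  define \<gamma> :: "('t, 'p, 'v, 's) exp set \<Rightarrow> 't atom \<Rightarrow> ('p, 'v, ('t, 'p, 'v, 's) exp set) outc \<Rightarrow> 's"
    where "\<gamma> = (\<lambda>C \<alpha> z. case z of Acc \<Rightarrow> deriv (rep C) \<alpha> Acc | Rej \<Rightarrow> deriv (rep C) \<alpha> Rej
        | OutV v \<Rightarrow> deriv (rep C) \<alpha> (OutV v) | Trans p C' \<Rightarrow> Mv (rep C) \<alpha> p {x. h x = C'})"
  have aut: "wgkat_automaton \<gamma>"
    unfolding wgkat_automaton_def
  proof (intro allI)
    fix C \<alpha>
    let ?m = "map_outc id id h"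
    show "fin_supp (\<gamma> C \<alpha>)" unfolding fin_supp_def
    proof (rule finite_subset[of _ "{Acc, Rej} \<union> ?m ` {x. deriv (rep C) \<alpha> x \<noteq> 0}"])
      show "finite ({Acc, Rej} \<union> ?m ` {x. deriv (rep C) \<alpha> x \<noteq> 0})"
        using fs_deriv[of "rep C" \<alpha>] by (simp add: fin_supp_def)
      show "{x. \<gamma> C \<alpha> x \<noteq> 0} \<subseteq> {Acc, Rej} \<union> ?m ` {x. deriv (rep C) \<alpha> x \<noteq> 0}"
      proof
        fix z assume z: "z \<in> {x. \<gamma> C \<alpha> x \<noteq> 0}"
        show "z \<in> {Acc, Rej} \<union> ?m ` {x. deriv (rep C) \<alpha> x \<noteq> 0}"
        proof (cases z)
          case (OutV v) then show ?thesis using z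
            by (auto simp: \<gamma>_def intro: image_eqI[of _ _ "OutV v"])
        next
          case (Trans p C')
          then have "Mv (rep C) \<alpha> p {x. h x = C'} \<noteq> 0" using z by (simp add: \<gamma>_def)
          then obtain x where "h x = C'" "deriv (rep C) \<alpha> (Trans p x) \<noteq> 0"
            unfolding Mv_def by (auto dest: mass_nz)
          then show ?thesis using Trans by (auto intro: image_eqI[of _ _ "Trans p x"])
        qed simp_all
      qed
    qed
  qed
  have repR: "R x (rep (h x))" for x
  proof -
    have "\<exists>e. h x = h e" by blast
    then have "h x = h (rep (h x))" unfolding rep_def by (rule someI_ex)
    then have "x \<equiv>\<^sub>w rep (h x)" unfolding h_def by (rule h_eq[THEN iffD1])
    then show ?thesis by (rule sound)
  qed
  have cl: "closed {x. h x = y}" for y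
    unfolding closed_def h_def by (auto simp: h_eq intro: eqv.trans eqv.sym)
  have hom: "is_hom deriv \<gamma> h"
    unfolding is_hom_def
  proof (intro allI conjI)
    fix x \<alpha>
    show "\<gamma> (h x) \<alpha> Acc = deriv x \<alpha> Acc" using repR[of x] by (simp add: \<gamma>_def R_def)
    show "\<gamma> (h x) \<alpha> Rej = deriv x \<alpha> Rej" using repR[of x] by (simp add: \<gamma>_def R_def)
    fix v show "\<gamma> (h x) \<alpha> (OutV v) = deriv x \<alpha> (OutV v)" using repR[of x] by (simp add: \<gamma>_def R_def)
  next
    fix x \<alpha> p y
    have "mass (deriv x \<alpha>) {Trans p x' |x'. h x' = y} = Mv x \<alpha> p {x'. h x' = y}"
      unfolding Mv_def by (rule mass_Trans)
    then show "\<gamma> (h x) \<alpha> (Trans p y) = mass (deriv x \<alpha>) {Trans p x' |x'. h x' = y}"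
      using repR[of x] cl[of y] by (simp add: \<gamma>_def R_def)
  qed
  show ?thesis using aut hom h_eq unfolding h_def by blast
qed

end
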